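(* Let $G$ be a finite connected graph. Let $\mathcal P_e$ (resp. $\mathcal P_o$) be the set of equivalence classes of prime reduced cycles of $G$ of even (resp. odd) length, and $\mathcal P_a$ the set of equivalence classes of prime reduced alternating cycles of $D_G$. Then: (1) If $C=(e_1,e_2,\dots,e_{2r-1},e_{2r})$ is a prime reduced cycle of $G$ of length $2r$, then $\tilde C=[e_1,e_2^{-1},e_3,\dots,e_{2r-1},e_{2r}^{-1}]$ and $\bar C=[e_1^{-1},e_2,e_3^{-1},\dots,e_{2r-1}^{-1},e_{2r}]$ are prime reduced alternating cycles of $D_G$ of length $2r$. (2) If $C=(e_1,\dots,e_{2r+1})$ is a prime reduced cycle of $G$ of length $2r+1$, then $\tilde C=[e_1,e_2^{-1},\dots,e_{2r+1},e_1^{-1},e_2,\dots,e_{2r+1}^{-1}]$ (the arcs $e_1,\dots,e_{2r+1},e_1,\dots,e_{2r+1}$ with every second arc, starting from the second, replaced by its inverse) is a prime reduced alternating cycle of $D_G$ of length $2(2r+1)$. (3) These assignments induce a bijection from $(\mathcal P_e\times\{1,2\})\cup\mathcal P_o$ onto $\mathcal P_a$, under which each class in $\mathcal P_e$ of length $2r$ corresponds to exactly two classes in $\mathcal P_a$ of length $2r$ and each class in $\mathcal P_o$ of length $2r+1$ corresponds to exactly one class in $\mathcal P_a$ of length $2(2r+1)$.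
   Context: Graphs are finite and simple. For a connected graph $G$, $D_G$ is its symmetric digraph with arc set $D(G)=\{(u,v),(v,u): uv\in E(G)\}$; for $e=(u,v)$, $o(e)=u$, $t(e)=v$, $e^{-1}=(v,u)$. A cycle of length $k$ in $G$ is a sequence $(e_1,\dots,e_k)$ of arcs with $t(e_i)=o(e_{i+1})$ ($1\le i\le k-1$) and $t(e_k)=o(e_1)$; it has backtracking if $e_{i+1}=e_i^{-1}$ for some $i\le k-1$; it is reduced if neither it nor its double $(e_1,\dots,e_k,e_1,\dots,e_k)$ has backtracking; it is prime if it is not $B^r$ for a cycle $B$ and $r\ge 2$; two cycles are equivalent if one is a cyclic shift of the other. An alternating walk of length $r$ in $D_G$ is a sequence $[e_1,\dots,e_r]$ of arcs with vertices $v_0,\dots,v_r$ such that either $e_i=(v_{i-1},v_i)$ for odd $i$ and $e_i=(v_i,v_{i-1})$ for even $i$, or $e_i=(v_i,v_{i-1})$ for odd $i$ and $e_i=(v_{i-1},v_i)$ for even $i$. It has backtracking if $e_{i+1}=e_i$ for some $i\le r-1$. An alternating cycle is an alternating walk of even length with $v_0=v_r$; it has a tail if $e_r=e_1$; it is reduced if it has neither backtracking nor a tail. Equivalence (cyclic shift of arc sequence), multiples and primality are as for cycles. *)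

theory Defs
  imports Main
begin

(* A finite simple graph G is given by its vertex set V and its symmetric,
   irreflexive adjacency relation Adj.  Adj is exactly the arc set D(G) of
   the symmetric digraph D_G. Arcs are pairs (u,v). *)

type_synonym 'a arc = "'a \<times> 'a"

definition finite_connected_graph :: "'a set \<Rightarrow> 'a arc set \<Rightarrow> bool" where
  "finite_connected_graph V Adj \<longleftrightarrow>
     finite V \<and> V \<noteq> {} \<and> Adj \<subseteq> V \<times> V \<and> sym Adj \<and> irrefl Adj \<and>
     (\<forall>u\<in>V. \<forall>v\<in>V. (u, v) \<in> Adj\<^sup>*)"

definition orig :: "'a arc \<Rightarrow> 'a" where "orig e = fst e"
definition termn :: "'a arc \<Rightarrow> 'a" where "termn e = snd e"
definition arc_inv :: "'a arc \<Rightarrow> 'a arc" where "arc_inv e = (snd e, fst e)"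

definition is_cycle :: "'a arc set \<Rightarrow> 'a arc list \<Rightarrow> bool" where
  "is_cycle Adj C \<longleftrightarrow> C \<noteq> [] \<and> set C \<subseteq> Adj \<and>
     (\<forall>i. i + 1 < length C \<longrightarrow> termn (C ! i) = orig (C ! (i + 1))) \<and>
     termn (last C) = orig (hd C)"

definition has_backtracking :: "'a arc list \<Rightarrow> bool" where
  "has_backtracking C \<longleftrightarrow> (\<exists>i. i + 1 < length C \<and> C ! (i + 1) = arc_inv (C ! i))"

definition reduced_cycle :: "'a arc set \<Rightarrow> 'a arc list \<Rightarrow> bool" where
  "reduced_cycle Adj C \<longleftrightarrow> is_cycle Adj C \<and> \<not> has_backtracking C \<and> \<not> has_backtracking (C @ C)"

definition prime_cycle :: "'a arc set \<Rightarrow> 'a arc list \<Rightarrow> bool" where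
  "prime_cycle Adj C \<longleftrightarrow> is_cycle Adj C \<and>
     \<not> (\<exists>B r. is_cycle Adj B \<and> r \<ge> 2 \<and> C = concat (replicate r B))"

(* alternating walks, with 0-based indices: arc number i (0-based) is arc number i+1 (1-based) *)
definition alt_walk :: "'a arc set \<Rightarrow> 'a arc list \<Rightarrow> 'a list \<Rightarrow> bool" where
  "alt_walk Adj W vs \<longleftrightarrow> set W \<subseteq> Adj \<and> length vs = length W + 1 \<and>
     ((\<forall>i<length W. W ! i = (if even i then (vs ! i, vs ! (i + 1)) else (vs ! (i + 1), vs ! i))) \<or>
      (\<forall>i<length W. W ! i = (if even i then (vs ! (i + 1), vs ! i) else (vs ! i, vs ! (i + 1)))))"

definition is_alt_cycle :: "'a arc set \<Rightarrow> 'a arc list \<Rightarrow> bool" where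
  "is_alt_cycle Adj W \<longleftrightarrow> W \<noteq> [] \<and> even (length W) \<and>
     (\<exists>vs. alt_walk Adj W vs \<and> vs ! 0 = vs ! length W)"

definition alt_has_backtracking :: "'a arc list \<Rightarrow> bool" where
  "alt_has_backtracking W \<longleftrightarrow> (\<exists>i. i + 1 < length W \<and> W ! (i + 1) = W ! i)"

definition alt_has_tail :: "'a arc list \<Rightarrow> bool" where
  "alt_has_tail W \<longleftrightarrow> W \<noteq> [] \<and> last W = hd W"

definition reduced_alt_cycle :: "'a arc set \<Rightarrow> 'a arc list \<Rightarrow> bool" where
  "reduced_alt_cycle Adj W \<longleftrightarrow> is_alt_cycle Adj W \<and> \<not> alt_has_backtracking W \<and> \<not> alt_has_tail W"

definition prime_alt_cycle :: "'a arc set \<Rightarrow> 'a arc list \<Rightarrow> bool" where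
  "prime_alt_cycle Adj W \<longleftrightarrow> is_alt_cycle Adj W \<and>
     \<not> (\<exists>B r. is_alt_cycle Adj B \<and> r \<ge> 2 \<and> W = concat (replicate r B))"

definition eq_class :: "'a arc list \<Rightarrow> 'a arc list set" where
  "eq_class C = {C'. \<exists>n. C' = rotate n C}"

definition P_even :: "'a arc set \<Rightarrow> 'a arc list set set" where
  "P_even Adj = {eq_class C | C. prime_cycle Adj C \<and> reduced_cycle Adj C \<and> even (length C)}"

definition P_odd :: "'a arc set \<Rightarrow> 'a arc list set set" where
  "P_odd Adj = {eq_class C | C. prime_cycle Adj C \<and> reduced_cycle Adj C \<and> odd (length C)}"

definition P_alt :: "'a arc set \<Rightarrow> 'a arc list set set" where
  "P_alt Adj = {eq_class W | W. prime_alt_cycle Adj W \<and> reduced_alt_cycle Adj W}"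

definition tilde_seq :: "'a arc list \<Rightarrow> 'a arc list" where
  "tilde_seq C = map (\<lambda>i. if odd i then arc_inv (C ! i) else C ! i) [0..<length C]"

definition bar_seq :: "'a arc list \<Rightarrow> 'a arc list" where
  "bar_seq C = map (\<lambda>i. if even i then arc_inv (C ! i) else C ! i) [0..<length C]"

definition tilde_even :: "'a arc list \<Rightarrow> 'a arc list" where "tilde_even C = tilde_seq C"
definition bar_even :: "'a arc list \<Rightarrow> 'a arc list" where "bar_even C = bar_seq C"
definition tilde_odd :: "'a arc list \<Rightarrow> 'a arc list" where "tilde_odd C = tilde_seq (C @ C)"

end

theory Submission
  imports Defs
begin


abbreviation pw :: "nat \<Rightarrow> 'b list \<Rightarrow> 'b list" where "pw r B \<equiv> concat (replicate r B)"

lemma even_mod_iff: "even (b::nat) \<Longrightarrow> even (a mod b) = even a"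
  by (simp add: dvd_mod_iff)

lemma len_pw: "length (pw r B) = r * length B"
  by (induct r) auto

lemma nth_pw: "i < r * length B \<Longrightarrow> pw r B ! i = B ! (i mod length B)"
proof (induct r arbitrary: i)
  case 0 then show ?case by simp
next
  case (Suc r)
  show ?case
  proof (cases "i < length B")
    case True then show ?thesis by (simp add: nth_append)
  next
    case False
    then have "i - length B < r * length B" using Suc.prems by simp
    then have "pw r B ! (i - length B) = B ! ((i - length B) mod length B)" using Suc.hyps by blast
    moreover have "(i - length B) mod length B = i mod length B" using False le_mod_geq[of "length B" i] by simp
    ultimately show ?thesis using False by (simp add: nth_append)
  qed
qed

lemma pw_mult: "pw r (pw s R) = pw (r * s) R"
  by (induct r) (auto simp: replicate_add)

lemma pw_2: "pw 2 R = R @ R"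
  by (simp add: numeral_2_eq_2)

lemma arc_inv_inv[simp]: "arc_inv (arc_inv e) = e" by (simp add: arc_inv_def)
lemma inv_eq_iff: "(arc_inv a = b) = (a = arc_inv b)" by (auto simp: arc_inv_def)

lemma len_tilde[simp]: "length (tilde_seq C) = length C" by (simp add: tilde_seq_def)
lemma len_bar[simp]: "length (bar_seq C) = length C" by (simp add: bar_seq_def)
lemma tilde_nth: "i < length C \<Longrightarrow> tilde_seq C ! i = (if odd i then arc_inv (C!i) else C!i)"
  by (simp add: tilde_seq_def)
lemma bar_nth: "i < length C \<Longrightarrow> bar_seq C ! i = (if even i then arc_inv (C!i) else C!i)"
  by (simp add: bar_seq_def)

lemma tilde_tilde[simp]: "tilde_seq (tilde_seq C) = C"
  by (rule nth_equalityI) (auto simp: tilde_nth)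
lemma bar_bar[simp]: "bar_seq (bar_seq C) = C"
  by (rule nth_equalityI) (auto simp: bar_nth)

lemma tilde_pw: "even (length B) \<Longrightarrow> tilde_seq (pw r B) = pw r (tilde_seq B)"
proof (rule nth_equalityI)
  assume e: "even (length B)"
  show "length (tilde_seq (pw r B)) = length (pw r (tilde_seq B))" by (simp add: len_pw)
  fix i assume "i < length (tilde_seq (pw r B))"
  then have i: "i < r * length B" by (simp add: len_pw)
  then have "length B > 0" by (cases "length B") auto
  then show "tilde_seq (pw r B) ! i = pw r (tilde_seq B) ! i"
    using i e by (simp add: tilde_nth len_pw nth_pw even_mod_iff)
qed

lemma bar_pw: "even (length B) \<Longrightarrow> bar_seq (pw r B) = pw r (bar_seq B)"
proof (rule nth_equalityI)
  assume e: "even (length B)"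
  show "length (bar_seq (pw r B)) = length (pw r (bar_seq B))" by (simp add: len_pw)
  fix i assume "i < length (bar_seq (pw r B))"
  then have i: "i < r * length B" by (simp add: len_pw)
  then have "length B > 0" by (cases "length B") auto
  then show "bar_seq (pw r B) ! i = pw r (bar_seq B) ! i"
    using i e by (simp add: bar_nth len_pw nth_pw even_mod_iff)
qed

lemma parity_mod: "even (length X) \<Longrightarrow> even ((n + i) mod length X) = even (n + i)"
  by (rule even_mod_iff)

lemma tilde_rotate: "even (length X) \<Longrightarrow>
  rotate n (tilde_seq X) = (if even n then tilde_seq (rotate n X) else bar_seq (rotate n X))"
proof (rule nth_equalityI)
  assume e: "even (length X)"
  show "length (rotate n (tilde_seq X)) = length (if even n then tilde_seq (rotate n X) else bar_seq (rotate n X))" by simp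
  fix i assume i: "i < length (rotate n (tilde_seq X))"
  then have k: "length X > 0" and i': "i < length X" by auto
  have m: "(n + i) mod length X < length X" using k by simp
  have L: "rotate n (tilde_seq X) ! i = (if odd (n+i) then arc_inv (X ! ((n + i) mod length X)) else X ! ((n + i) mod length X))"
    using i' m parity_mod[OF e, of n i] by (simp add: nth_rotate tilde_nth)
  have R1: "tilde_seq (rotate n X) ! i = (if odd i then arc_inv (X ! ((n + i) mod length X)) else X ! ((n + i) mod length X))"
    using i' by (simp add: nth_rotate tilde_nth)
  have R2: "bar_seq (rotate n X) ! i = (if even i then arc_inv (X ! ((n + i) mod length X)) else X ! ((n + i) mod length X))"
    using i' by (simp add: nth_rotate bar_nth)
  show "rotate n (tilde_seq X) ! i = (if even n then tilde_seq (rotate n X) else bar_seq (rotate n X)) ! i"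
    using L R1 R2 by auto
qed

lemma bar_rotate: "even (length X) \<Longrightarrow>
  rotate n (bar_seq X) = (if even n then bar_seq (rotate n X) else tilde_seq (rotate n X))"
proof (rule nth_equalityI)
  assume e: "even (length X)"
  show "length (rotate n (bar_seq X)) = length (if even n then bar_seq (rotate n X) else tilde_seq (rotate n X))" by simp
  fix i assume i: "i < length (rotate n (bar_seq X))"
  then have k: "length X > 0" and i': "i < length X" by auto
  have m: "(n + i) mod length X < length X" using k by simp
  have L: "rotate n (bar_seq X) ! i = (if even (n+i) then arc_inv (X ! ((n + i) mod length X)) else X ! ((n + i) mod length X))"
    using i' m parity_mod[OF e, of n i] by (simp add: nth_rotate bar_nth)
  have R1: "tilde_seq (rotate n X) ! i = (if odd i then arc_inv (X ! ((n + i) mod length X)) else X ! ((n + i) mod length X))"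
    using i' by (simp add: nth_rotate tilde_nth)
  have R2: "bar_seq (rotate n X) ! i = (if even i then arc_inv (X ! ((n + i) mod length X)) else X ! ((n + i) mod length X))"
    using i' by (simp add: nth_rotate bar_nth)
  show "rotate n (bar_seq X) ! i = (if even n then bar_seq (rotate n X) else tilde_seq (rotate n X)) ! i"
    using L R1 R2 by auto
qed

lemma rotate_double: "rotate n (C @ C) = rotate n C @ rotate n C"
proof (cases "C = []")
  case True then show ?thesis by simp
next
  case False
  then have k: "length C > 0" by simp
  have "rotate n (pw 2 C) = pw 2 (rotate n C)"
  proof (rule nth_equalityI)
    show "length (rotate n (pw 2 C)) = length (pw 2 (rotate n C))" by (simp add: len_pw)
    fix i assume "i < length (rotate n (pw 2 C))"
    then have i: "i < 2 * length C" by (simp add: len_pw)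
    have "rotate n (pw 2 C) ! i = pw 2 C ! ((n + i) mod (2 * length C))"
      using i by (simp add: nth_rotate len_pw)
    also have "\<dots> = C ! ((n + i) mod (2 * length C) mod length C)"
      using k by (simp add: nth_pw)
    also have "\<dots> = C ! ((n + i) mod length C)"
      by (simp add: mod_mod_cancel)
    also have "\<dots> = rotate n C ! (i mod length C)"
      using k by (simp add: nth_rotate mod_add_right_eq)
    also have "\<dots> = pw 2 (rotate n C) ! i" using i by (simp add: nth_pw)
    finally show "rotate n (pw 2 C) ! i = pw 2 (rotate n C) ! i" .
  qed
  then show ?thesis by (simp add: pw_2)
qed

lemma rotate_pw: "rotate (length B) (pw r B) = pw r B"
proof (cases "length B = 0 \<or> r = 0")
  case True then show ?thesis by auto
next
  case False
  then have k: "length B > 0" by simp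
  show ?thesis
  proof (rule nth_equalityI)
    show "length (rotate (length B) (pw r B)) = length (pw r B)" by simp
    fix i assume "i < length (rotate (length B) (pw r B))"
    then have i: "i < r * length B" by (simp add: len_pw)
    have "rotate (length B) (pw r B) ! i = pw r B ! ((length B + i) mod (r * length B))"
      using i by (simp add: nth_rotate len_pw)
    also have "\<dots> = B ! ((length B + i) mod (r * length B) mod length B)"
      using k False by (simp add: nth_pw)
    also have "\<dots> = B ! (i mod length B)"
      by (simp add: mod_mod_cancel)
    also have "\<dots> = pw r B ! i" using i by (simp add: nth_pw)
    finally show "rotate (length B) (pw r B) ! i = pw r B ! i" .
  qed
qed

lemma ec_rotate: "eq_class (rotate n X) = eq_class X"
proof
  show "eq_class (rotate n X) \<subseteq> eq_class X"
    by (auto simp: eq_class_def rotate_rotate)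
  show "eq_class X \<subseteq> eq_class (rotate n X)"
  proof
    fix Y assume "Y \<in> eq_class X"
    then obtain m where Y: "Y = rotate m X" by (auto simp: eq_class_def)
    show "Y \<in> eq_class (rotate n X)"
    proof (cases "X = []")
      case True then show ?thesis using Y by (auto simp: eq_class_def)
    next
      case False
      have "n \<le> length X * n" using False by (cases "length X") auto
      then have "m + length X * n - n + n = m + length X * n" by linarith
      then have "rotate (m + length X * n - n) (rotate n X) = rotate (m + length X * n) X"
        by (simp only: rotate_rotate)
      also have "\<dots> = rotate m X"
        by (metis mod_mult_self2 rotate_conv_mod mult.commute)
      finally show ?thesis using Y unfolding eq_class_def by (metis (mono_tags) mem_Collect_eq)
    qed
  qed
qed

lemma ec_self: "X \<in> eq_class X"
  by (auto simp: eq_class_def intro: exI[of _ 0])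

lemma ec_eq_iff: "eq_class X = eq_class Y \<longleftrightarrow> (\<exists>n. X = rotate n Y)"
proof
  assume "eq_class X = eq_class Y"
  then have "X \<in> eq_class Y" using ec_self[of X] by simp
  then show "\<exists>n. X = rotate n Y" by (simp add: eq_class_def)
next
  assume "\<exists>n. X = rotate n Y"
  then show "eq_class X = eq_class Y" using ec_rotate by auto
qed



lemma arc_split: "e = (orig e, termn e)" by (simp add: orig_def termn_def)
lemma orig_inv[simp]: "orig (arc_inv e) = termn e" by (simp add: orig_def termn_def arc_inv_def)
lemma termn_inv[simp]: "termn (arc_inv e) = orig e" by (simp add: orig_def termn_def arc_inv_def)
lemma orig_pair[simp]: "orig (a, b) = a" by (simp add: orig_def)
lemma termn_pair[simp]: "termn (a, b) = b" by (simp add: termn_def)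
lemma inv_pair[simp]: "arc_inv (a, b) = (b, a)" by (simp add: arc_inv_def)

lemma is_cycle_mod: "is_cycle Adj C \<longleftrightarrow> C \<noteq> [] \<and> set C \<subseteq> Adj \<and>
   (\<forall>j<length C. termn (C!j) = orig (C!(Suc j mod length C)))"
proof
  assume c: "is_cycle Adj C"
  then have ne: "C \<noteq> []" and s: "set C \<subseteq> Adj"
    and con: "\<And>i. i + 1 < length C \<Longrightarrow> termn (C ! i) = orig (C ! (i + 1))"
    and cl: "termn (last C) = orig (hd C)" by (auto simp: is_cycle_def)
  have "\<forall>j<length C. termn (C!j) = orig (C!(Suc j mod length C))"
  proof (intro allI impI)
    fix j assume j: "j < length C"
    show "termn (C!j) = orig (C!(Suc j mod length C))"
    proof (cases "Suc j < length C")
      case True then show ?thesis using con[of j] by simp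
    next
      case False
      then have sj: "Suc j = length C" using j by simp
      then have "j = length C - 1" by simp
      moreover have "Suc j mod length C = 0" using sj by simp
      ultimately show ?thesis using cl ne by (simp add: last_conv_nth hd_conv_nth)
    qed
  qed
  then show "C \<noteq> [] \<and> set C \<subseteq> Adj \<and> (\<forall>j<length C. termn (C!j) = orig (C!(Suc j mod length C)))"
    using ne s by blast
next
  assume a: "C \<noteq> [] \<and> set C \<subseteq> Adj \<and> (\<forall>j<length C. termn (C!j) = orig (C!(Suc j mod length C)))"
  then have ne: "C \<noteq> []" and s: "set C \<subseteq> Adj"
    and h: "\<And>j. j < length C \<Longrightarrow> termn (C!j) = orig (C!(Suc j mod length C))" by auto
  have "\<And>i. i + 1 < length C \<Longrightarrow> termn (C ! i) = orig (C ! (i + 1))"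
    using h by fastforce
  moreover have "termn (last C) = orig (hd C)"
  proof -
    have "length C - 1 < length C" and "Suc (length C - 1) mod length C = 0" using ne by auto
    then show ?thesis using h[of "length C - 1"] ne by (simp add: last_conv_nth hd_conv_nth)
  qed
  ultimately show "is_cycle Adj C" using ne s by (simp add: is_cycle_def)
qed

lemma cycle_rotate: "is_cycle Adj C \<Longrightarrow> is_cycle Adj (rotate n C)"
proof -
  assume c: "is_cycle Adj C"
  then have ne: "C \<noteq> []" and s: "set C \<subseteq> Adj"
    and h: "\<And>j. j < length C \<Longrightarrow> termn (C!j) = orig (C!(Suc j mod length C))"
    by (auto simp: is_cycle_mod)
  let ?k = "length C"
  have k: "?k > 0" using ne by simp
  have "\<forall>j<length (rotate n C). termn (rotate n C ! j) = orig (rotate n C ! (Suc j mod length (rotate n C)))"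
  proof (intro allI impI)
    fix j assume "j < length (rotate n C)"
    then have j: "j < ?k" by simp
    have p: "(n + j) mod ?k < ?k" using k by simp
    have e: "(n + Suc j mod ?k) mod ?k = Suc ((n + j) mod ?k) mod ?k"
      by (simp add: mod_add_right_eq mod_Suc_eq)
    show "termn (rotate n C ! j) = orig (rotate n C ! (Suc j mod length (rotate n C)))"
      using h[OF p] j k e by (simp add: nth_rotate)
  qed
  then show ?thesis using ne s by (simp add: is_cycle_mod)
qed

lemma set_pw_sub: "set (pw r B) \<subseteq> set B"
  by (induct r) auto

lemma set_pw: "r \<ge> 1 \<Longrightarrow> set (pw r B) = set B"
  using set_pw_sub[of r B] by (cases r) auto

lemma cycle_pw_iff: "r \<ge> 1 \<Longrightarrow> is_cycle Adj (pw r B) \<longleftrightarrow> is_cycle Adj B"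
proof -
  assume r: "r \<ge> 1"
  let ?k = "length B" and ?n = "r * length B"
  have dv: "?k dvd ?n" by simp
  have ne: "pw r B \<noteq> [] \<longleftrightarrow> B \<noteq> []"
  proof -
    have "(pw r B = []) = (length (pw r B) = 0)" by simp
    also have "\<dots> = (length B = 0)" using r by (simp add: len_pw)
    finally show ?thesis by simp
  qed
  have cond: "(\<forall>j<?n. termn (pw r B ! j) = orig (pw r B ! (Suc j mod ?n)))
       \<longleftrightarrow> (\<forall>j<?k. termn (B!j) = orig (B!(Suc j mod ?k)))" if k: "?k > 0"
  proof
    assume h: "\<forall>j<?n. termn (pw r B ! j) = orig (pw r B ! (Suc j mod ?n))"
    show "\<forall>j<?k. termn (B!j) = orig (B!(Suc j mod ?k))"
    proof (intro allI impI)
      fix j assume j: "j < ?k"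
      have "?k \<le> ?n" using r by simp
      then have jn: "j < ?n" using j by linarith
      then have n0: "?n > 0" by linarith
      have "pw r B ! j = B ! j" using jn j by (simp add: nth_pw)
      moreover have "pw r B ! (Suc j mod ?n) = B ! (Suc j mod ?k)"
        using n0 by (simp add: nth_pw mod_mod_cancel)
      ultimately show "termn (B!j) = orig (B!(Suc j mod ?k))" using h jn by metis
    qed
  next
    assume h: "\<forall>j<?k. termn (B!j) = orig (B!(Suc j mod ?k))"
    show "\<forall>j<?n. termn (pw r B ! j) = orig (pw r B ! (Suc j mod ?n))"
    proof (intro allI impI)
      fix j assume jn: "j < ?n"
      then have n0: "?n > 0" by linarith
      have "pw r B ! j = B ! (j mod ?k)" using jn by (simp add: nth_pw)
      moreover have "pw r B ! (Suc j mod ?n) = B ! (Suc j mod ?k)"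
        using n0 by (simp add: nth_pw mod_mod_cancel)
      moreover have "Suc (j mod ?k) mod ?k = Suc j mod ?k" by (simp add: mod_Suc_eq)
      moreover have "j mod ?k < ?k" using k by simp
      ultimately show "termn (pw r B ! j) = orig (pw r B ! (Suc j mod ?n))" using h by metis
    qed
  qed
  show ?thesis
  proof (cases "B = []")
    case True then show ?thesis by (simp add: is_cycle_def)
  next
    case False
    then show ?thesis using cond ne set_pw[OF r, of B] by (simp add: is_cycle_mod len_pw)
  qed
qed

lemma bt_append: "has_backtracking C \<Longrightarrow> has_backtracking (C @ D)"
proof -
  assume "has_backtracking C"
  then obtain i where i: "i + 1 < length C" and b: "C ! (i+1) = arc_inv (C ! i)"
    by (auto simp: has_backtracking_def)
  have "(C@D) ! (i+1) = arc_inv ((C@D) ! i)" using i b by (simp add: nth_append)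
  moreover have "i + 1 < length (C @ D)" using i by simp
  ultimately show ?thesis unfolding has_backtracking_def by blast
qed

lemma bt_double: "C \<noteq> [] \<Longrightarrow> has_backtracking (C @ C) \<longleftrightarrow> has_backtracking C \<or> hd C = arc_inv (last C)"
proof
  assume ne: "C \<noteq> []"
  let ?n = "length C"
  assume "has_backtracking (C @ C)"
  then obtain i where i0: "i + 1 < length (C @ C)" and b: "(C@C) ! (i+1) = arc_inv ((C@C) ! i)"
    unfolding has_backtracking_def by blast
  have i: "i + 1 < 2 * ?n" using i0 by simp
  consider "i + 1 < ?n" | "i + 1 = ?n" | "i \<ge> ?n" by linarith
  then show "has_backtracking C \<or> hd C = arc_inv (last C)"
  proof cases
    case 1 then have "C ! (i+1) = arc_inv (C ! i)" using b by (simp add: nth_append)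
    then show ?thesis using 1 by (auto simp: has_backtracking_def)
  next
    case 2 then have "C ! 0 = arc_inv (C ! i)" using b by (simp add: nth_append)
    moreover have "i = ?n - 1" using 2 by simp
    ultimately show ?thesis using ne by (simp add: hd_conv_nth last_conv_nth)
  next
    case 3
    then have "C ! (i - ?n + 1) = arc_inv (C ! (i - ?n))" using b
      by (simp add: nth_append Suc_diff_le)
    moreover have "i - ?n + 1 < ?n" using 3 i by simp
    ultimately show ?thesis by (auto simp: has_backtracking_def)
  qed
next
  assume ne: "C \<noteq> []"
  let ?n = "length C"
  assume "has_backtracking C \<or> hd C = arc_inv (last C)"
  then show "has_backtracking (C @ C)"
  proof
    assume "has_backtracking C" then show ?thesis by (rule bt_append)
  next
    assume h: "hd C = arc_inv (last C)"
    have "(C@C) ! (?n - 1 + 1) = arc_inv ((C@C) ! (?n - 1))"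
      using h ne by (simp add: nth_append hd_conv_nth last_conv_nth)
    moreover have "?n - 1 + 1 < length (C@C)" using ne by simp
    ultimately show ?thesis unfolding has_backtracking_def by blast
  qed
qed

lemma reduced_iff: "reduced_cycle Adj C \<longleftrightarrow> is_cycle Adj C \<and> \<not> has_backtracking C \<and> hd C \<noteq> arc_inv (last C)"
  unfolding reduced_cycle_def using bt_double[of C] by (auto simp: is_cycle_def)

lemma altbt_tilde: "alt_has_backtracking (tilde_seq C) \<longleftrightarrow> has_backtracking C"
proof -
  have "\<And>i. i + 1 < length C \<Longrightarrow> (tilde_seq C ! (i+1) = tilde_seq C ! i \<longleftrightarrow> C!(i+1) = arc_inv (C!i))"
    by (auto simp: tilde_nth inv_eq_iff)
  then show ?thesis unfolding alt_has_backtracking_def has_backtracking_def by auto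
qed

lemma altbt_bar: "alt_has_backtracking (bar_seq C) \<longleftrightarrow> has_backtracking C"
proof -
  have "\<And>i. i + 1 < length C \<Longrightarrow> (bar_seq C ! (i+1) = bar_seq C ! i \<longleftrightarrow> C!(i+1) = arc_inv (C!i))"
    by (auto simp: bar_nth inv_eq_iff)
  then show ?thesis unfolding alt_has_backtracking_def has_backtracking_def by auto
qed

lemma tail_tilde: "C \<noteq> [] \<Longrightarrow> even (length C) \<Longrightarrow> alt_has_tail (tilde_seq C) \<longleftrightarrow> hd C = arc_inv (last C)"
proof -
  assume ne: "C \<noteq> []" and e: "even (length C)"
  then have o: "odd (length C - 1)" and l: "length C - 1 < length C" by (auto elim: evenE)
  have ne': "tilde_seq C \<noteq> []" using ne by (metis len_tilde length_0_conv)
  have "last (tilde_seq C) = arc_inv (last C)"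
    using ne ne' o l by (simp add: last_conv_nth tilde_nth)
  moreover have "hd (tilde_seq C) = hd C" using ne ne' by (simp add: hd_conv_nth tilde_nth)
  ultimately show ?thesis using ne' by (auto simp: alt_has_tail_def inv_eq_iff)
qed

lemma tail_bar: "C \<noteq> [] \<Longrightarrow> even (length C) \<Longrightarrow> alt_has_tail (bar_seq C) \<longleftrightarrow> hd C = arc_inv (last C)"
proof -
  assume ne: "C \<noteq> []" and e: "even (length C)"
  then have o: "odd (length C - 1)" and l: "length C - 1 < length C" by (auto elim: evenE)
  have ne': "bar_seq C \<noteq> []" using ne by (metis len_bar length_0_conv)
  have "last (bar_seq C) = last C"
    using ne ne' o l by (simp add: last_conv_nth bar_nth)
  moreover have "hd (bar_seq C) = arc_inv (hd C)" using ne ne' by (simp add: hd_conv_nth bar_nth)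
  ultimately show ?thesis using ne' by (auto simp: alt_has_tail_def inv_eq_iff)
qed



lemma inv_in: "sym Adj \<Longrightarrow> e \<in> Adj \<Longrightarrow> arc_inv e \<in> Adj"
  by (cases e) (auto simp: sym_def)

lemma G1:
  assumes sym: "sym Adj" and c: "is_cycle Adj C" and e: "even (length C)"
  shows "is_alt_cycle Adj (tilde_seq C) \<and> is_alt_cycle Adj (bar_seq C)"
proof -
  from c have ne: "C \<noteq> []" and s: "set C \<subseteq> Adj"
    and h: "\<And>j. j < length C \<Longrightarrow> termn (C!j) = orig (C!(Suc j mod length C))"
    by (auto simp: is_cycle_mod)
  let ?n = "length C"
  have n0: "?n > 0" using ne by simp
  define vs where "vs = map (\<lambda>i. orig (C ! (i mod ?n))) [0..<Suc ?n]"
  have vsl: "length vs = Suc ?n" by (simp add: vs_def)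
  have vsi: "\<And>i. i \<le> ?n \<Longrightarrow> vs ! i = orig (C ! (i mod ?n))"
    by (simp add: vs_def nth_map del: upt_Suc)
  have Ci: "\<And>i. i < ?n \<Longrightarrow> C ! i = (vs ! i, vs ! (i + 1))"
  proof -
    fix i assume i: "i < ?n"
    have "vs ! i = orig (C ! i)" using vsi[of i] i by simp
    moreover have "vs ! (i+1) = termn (C ! i)" using vsi[of "i+1"] i h[OF i] by simp
    ultimately show "C ! i = (vs ! i, vs ! (i + 1))" by (metis arc_split)
  qed
  have v0: "vs ! 0 = vs ! ?n" using vsi[of 0] vsi[of ?n] by simp
  have Cin: "\<And>i. i < ?n \<Longrightarrow> C ! i \<in> Adj" using s by auto
  have st: "set (tilde_seq C) \<subseteq> Adj"
  proof
    fix x assume "x \<in> set (tilde_seq C)"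
    then obtain i where i: "i < ?n" and x: "x = tilde_seq C ! i" by (auto simp: in_set_conv_nth)
    then show "x \<in> Adj" using Cin[OF i] inv_in[OF sym] by (auto simp: tilde_nth)
  qed
  have sb: "set (bar_seq C) \<subseteq> Adj"
  proof
    fix x assume "x \<in> set (bar_seq C)"
    then obtain i where i: "i < ?n" and x: "x = bar_seq C ! i" by (auto simp: in_set_conv_nth)
    then show "x \<in> Adj" using Cin[OF i] inv_in[OF sym] by (auto simp: bar_nth)
  qed
  have "alt_walk Adj (tilde_seq C) vs"
    unfolding alt_walk_def using st vsl by (auto simp: tilde_nth Ci)
  moreover have "alt_walk Adj (bar_seq C) vs"
    unfolding alt_walk_def using sb vsl by (auto simp: bar_nth Ci)
  moreover have "tilde_seq C \<noteq> []" "bar_seq C \<noteq> []" using ne by (metis len_tilde len_bar length_0_conv)+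
  ultimately show ?thesis using e v0 unfolding is_alt_cycle_def by auto
qed

lemma G1':
  assumes sym: "sym Adj" and a: "is_alt_cycle Adj W"
  shows "\<exists>C. is_cycle Adj C \<and> length C = length W \<and> (W = tilde_seq C \<or> W = bar_seq C)"
proof -
  from a obtain vs where ne: "W \<noteq> []" and aw: "alt_walk Adj W vs" and cl: "vs ! 0 = vs ! length W"
    unfolding is_alt_cycle_def by blast
  let ?n = "length W"
  define C where "C = map (\<lambda>i. (vs ! i, vs ! (Suc i))) [0..<?n]"
  have lC: "length C = ?n" by (simp add: C_def)
  have Ci: "\<And>i. i < ?n \<Longrightarrow> C ! i = (vs ! i, vs ! (Suc i))" by (simp add: C_def)
  from aw have sW: "set W \<subseteq> Adj" and
    O: "(\<forall>i<?n. W ! i = (if even i then (vs ! i, vs ! (i + 1)) else (vs ! (i + 1), vs ! i))) \<or>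
      (\<forall>i<?n. W ! i = (if even i then (vs ! (i + 1), vs ! i) else (vs ! i, vs ! (i + 1))))"
    unfolding alt_walk_def by auto
  have WA: "\<And>i. i < ?n \<Longrightarrow> W ! i \<in> Adj" using sW by auto
  have Cin: "\<And>i. i < ?n \<Longrightarrow> C ! i \<in> Adj"
  proof -
    fix i assume i: "i < ?n"
    have "C ! i = W ! i \<or> C ! i = arc_inv (W ! i)" using O i Ci[OF i] by (cases "even i") auto
    then show "C ! i \<in> Adj" using WA[OF i] inv_in[OF sym, of "W ! i"] by auto
  qed
  have cyc: "is_cycle Adj C"
    unfolding is_cycle_mod
  proof (intro conjI allI impI)
    show "C \<noteq> []" using ne lC by auto
    show "set C \<subseteq> Adj"
    proof
      fix x assume "x \<in> set C"
      then obtain i where "i < length C" "x = C ! i" by (auto simp: in_set_conv_nth)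
      then show "x \<in> Adj" using Cin lC by auto
    qed
    fix j assume "j < length C"
    then have j: "j < ?n" using lC by simp
    show "termn (C ! j) = orig (C ! (Suc j mod length C))"
    proof (cases "Suc j < ?n")
      case True then show ?thesis using Ci j lC by simp
    next
      case False
      then have sj: "Suc j = ?n" using j by simp
      then show ?thesis using Ci[OF j] Ci[of 0] ne cl lC by simp
    qed
  qed
  from O have "W = tilde_seq C \<or> W = bar_seq C"
  proof
    assume o: "\<forall>i<?n. W ! i = (if even i then (vs ! i, vs ! (i + 1)) else (vs ! (i + 1), vs ! i))"
    have "W = tilde_seq C" by (rule nth_equalityI) (auto simp: lC tilde_nth Ci o)
    then show ?thesis by simp
  next
    assume o: "\<forall>i<?n. W ! i = (if even i then (vs ! (i + 1), vs ! i) else (vs ! i, vs ! (i + 1)))"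
    have "W = bar_seq C" by (rule nth_equalityI) (auto simp: lC bar_nth Ci o)
    then show ?thesis by simp
  qed
  then show ?thesis using cyc lC by blast
qed

definition noPow :: "'b list \<Rightarrow> bool" where
  "noPow X \<longleftrightarrow> \<not> (\<exists>B r. 2 \<le> r \<and> X = pw r B)"

lemma noPow_ne: "noPow X \<Longrightarrow> X \<noteq> []"
  unfolding noPow_def by (metis concat_replicate_trivial order_refl)

lemma prime_cycle_iff: "prime_cycle Adj C \<longleftrightarrow> is_cycle Adj C \<and> noPow C"
  unfolding prime_cycle_def noPow_def
  by (metis cycle_pw_iff le_trans one_le_numeral)

lemma prime_alt_intro:
  "is_alt_cycle Adj W \<Longrightarrow> (\<And>B r. even (length B) \<Longrightarrow> 2 \<le> r \<Longrightarrow> W \<noteq> pw r B) \<Longrightarrow> prime_alt_cycle Adj W"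
  unfolding prime_alt_cycle_def is_alt_cycle_def by blast

lemma prime_alt_dest:
  assumes sym: "sym Adj" and p: "prime_alt_cycle Adj W" and e: "even (length B)" and r: "2 \<le> r"
    and W: "W = pw r B"
  shows False
proof -
  from p have a: "is_alt_cycle Adj W" by (simp add: prime_alt_cycle_def)
  from G1'[OF sym a] obtain C where c: "is_cycle Adj C" and tb: "W = tilde_seq C \<or> W = bar_seq C" by blast
  have r1: "r \<ge> 1" using r by simp
  have "is_alt_cycle Adj B"
    using tb
  proof
    assume "W = tilde_seq C"
    then have "C = pw r (tilde_seq B)" using W tilde_pw[OF e] by (metis tilde_tilde)
    then have "is_cycle Adj (tilde_seq B)" using c cycle_pw_iff[OF r1] by metis
    then have "is_alt_cycle Adj (tilde_seq (tilde_seq B))" using G1[OF sym, of "tilde_seq B"] e by simp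
    then show ?thesis by simp
  next
    assume "W = bar_seq C"
    then have "C = pw r (bar_seq B)" using W bar_pw[OF e] by (metis bar_bar)
    then have "is_cycle Adj (bar_seq B)" using c cycle_pw_iff[OF r1] by metis
    then have "is_alt_cycle Adj (bar_seq (bar_seq B))" using G1[OF sym, of "bar_seq B"] e by simp
    then show ?thesis by simp
  qed
  then show False using p W r unfolding prime_alt_cycle_def by blast
qed

lemma rot_mult: "rotate m C = C \<Longrightarrow> rotate (m * x) C = C"
proof (induct x)
  case 0 then show ?case by simp
next
  case (Suc x)
  have "rotate (m * Suc x) C = rotate m (rotate (m * x) C)" by (simp add: rotate_rotate)
  then show ?case using Suc by simp
qed

lemma periodic: "rotate g C = C \<Longrightarrow> i < length C \<Longrightarrow> C ! i = C ! (i mod g)"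
proof (induct i rule: less_induct)
  case (less i)
  show ?case
  proof (cases "i < g")
    case True then show ?thesis by simp
  next
    case F: False
    show ?thesis
    proof (cases "g = 0")
      case True then show ?thesis by simp
    next
    case False
    then have g0: "g > 0" by simp
    have ig: "i - g < length C" using less by simp
    have "C ! (i - g) = rotate g C ! (i - g)" using less by simp
    also have "\<dots> = C ! ((g + (i - g)) mod length C)" using ig by (simp add: nth_rotate)
    also have "\<dots> = C ! i" using F less by simp
    finally have 1: "C ! (i - g) = C ! i" .
    have "i - g < i" using g0 F by simp
    then have "C ! (i - g) = C ! ((i - g) mod g)" using less ig by simp
    also have "(i - g) mod g = i mod g" using F le_mod_geq[of g i] by simp
    finally show ?thesis using 1 by simp
    qed
  qed
qed

lemma rot_fix:
  assumes np: "noPow C" and rc: "rotate n C = C"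
  shows "n mod length C = 0"
proof (rule ccontr)
  let ?k = "length C"
  have k: "?k > 0" using noPow_ne[OF np] by simp
  define m where "m = n mod ?k"
  assume "n mod length C \<noteq> 0"
  then have m0: "m \<noteq> 0" by (simp add: m_def)
  have mk: "m < ?k" using k by (simp add: m_def)
  have rm: "rotate m C = C" using rc by (metis m_def rotate_conv_mod)
  define g where "g = gcd m ?k"
  obtain x y where b: "m * x = ?k * y + g" using bezout_nat[OF m0] g_def by blast
  have rky: "rotate (?k * y) C = C" by (metis mod_mult_self1_is_0 rotate_conv_mod rotate0 id_apply mult.commute)
  have "rotate g C = rotate g (rotate (?k * y) C)" using rky by simp
  also have "\<dots> = rotate (g + ?k * y) C" by (rule rotate_rotate)
  also have "\<dots> = rotate (m * x) C" using b by (simp add: add.commute)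
  also have "\<dots> = C" by (rule rot_mult[OF rm])
  finally have rg: "rotate g C = C" .
  have g0: "g > 0" using m0 by (simp add: g_def)
  have gd: "g dvd ?k" by (simp add: g_def)
  have gm: "g \<le> m" using m0 by (simp add: g_def gcd_le1_nat)
  define q where "q = ?k div g"
  have kq: "q * g = ?k" using gd by (simp add: q_def)
  have q2: "q \<ge> 2"
  proof (rule ccontr)
    assume "\<not> q \<ge> 2"
    then have "q \<le> 1" by simp
    then have "q * g \<le> g" by simp
    then show False using kq gm mk by simp
  qed
  have "C = pw q (take g C)"
  proof (rule nth_equalityI)
    have lt: "length (take g C) = g" using gm mk by simp
    show "length C = length (pw q (take g C))" using lt kq by (simp add: len_pw)
    fix i assume i: "i < length C"
    have "i mod g < g" using g0 by simp
    then have "pw q (take g C) ! i = C ! (i mod g)"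
      using i lt kq by (simp add: nth_pw)
    then show "C ! i = pw q (take g C) ! i" using periodic[OF rg i] by simp
  qed
  then show False using np q2 unfolding noPow_def by blast
qed

lemma root: "X \<noteq> [] \<Longrightarrow> \<exists>R r. r \<ge> 1 \<and> X = pw r R \<and> noPow R"
proof (induct "length X" arbitrary: X rule: less_induct)
  case (less X)
  show ?case
  proof (cases "noPow X")
    case True then show ?thesis by (intro exI[of _ X] exI[of _ 1]) auto
  next
    case False
    then obtain B r where r: "2 \<le> r" and X: "X = pw r B" unfolding noPow_def by blast
    have B: "B \<noteq> []" using less.prems X by auto
    have "length B < length X" using X r B by (simp add: len_pw)
    then obtain R s where s: "s \<ge> 1" "B = pw s R" "noPow R" using less.hyps B by blast
    have "X = pw (r * s) R" using X s by (simp add: pw_mult)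
    moreover have "r * s \<ge> 1" using r s by simp
    ultimately show ?thesis using s by blast
  qed
qed



lemma part1:
  assumes sym: "sym Adj" and p: "prime_cycle Adj C" and rd: "reduced_cycle Adj C" and e: "even (length C)"
  shows "prime_alt_cycle Adj (tilde_seq C) \<and> reduced_alt_cycle Adj (tilde_seq C) \<and>
         prime_alt_cycle Adj (bar_seq C) \<and> reduced_alt_cycle Adj (bar_seq C)"
proof -
  from p have c: "is_cycle Adj C" and np: "noPow C" by (auto simp: prime_cycle_iff)
  from rd have nb: "\<not> has_backtracking C" and nj: "hd C \<noteq> arc_inv (last C)" by (auto simp: reduced_iff)
  have ne: "C \<noteq> []" using c by (simp add: is_cycle_def)
  have at: "is_alt_cycle Adj (tilde_seq C)" and ab: "is_alt_cycle Adj (bar_seq C)" using G1[OF sym c e] by auto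
  have "prime_alt_cycle Adj (tilde_seq C)"
  proof (rule prime_alt_intro[OF at])
    fix B :: "'a arc list" and r :: nat assume eB: "even (length B)" and r: "2 \<le> r"
    show "tilde_seq C \<noteq> pw r B"
    proof
      assume "tilde_seq C = pw r B"
      then have "C = pw r (tilde_seq B)" using tilde_pw[OF eB] by (metis tilde_tilde)
      then show False using np r unfolding noPow_def by blast
    qed
  qed
  moreover have "prime_alt_cycle Adj (bar_seq C)"
  proof (rule prime_alt_intro[OF ab])
    fix B :: "'a arc list" and r :: nat assume eB: "even (length B)" and r: "2 \<le> r"
    show "bar_seq C \<noteq> pw r B"
    proof
      assume "bar_seq C = pw r B"
      then have "C = pw r (bar_seq B)" using bar_pw[OF eB] by (metis bar_bar)
      then show False using np r unfolding noPow_def by blast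
    qed
  qed
  moreover have "reduced_alt_cycle Adj (tilde_seq C)"
    unfolding reduced_alt_cycle_def using at nb nj altbt_tilde tail_tilde[OF ne e] by blast
  moreover have "reduced_alt_cycle Adj (bar_seq C)"
    unfolding reduced_alt_cycle_def using ab nb nj altbt_bar tail_bar[OF ne e] by blast
  ultimately show ?thesis by blast
qed

lemma part2:
  assumes sym: "sym Adj" and p: "prime_cycle Adj C" and rd: "reduced_cycle Adj C" and o: "odd (length C)"
  shows "prime_alt_cycle Adj (tilde_seq (C @ C)) \<and> reduced_alt_cycle Adj (tilde_seq (C @ C))"
proof -
  from p have c: "is_cycle Adj C" and np: "noPow C" by (auto simp: prime_cycle_iff)
  from rd have nb2: "\<not> has_backtracking (C @ C)" by (simp add: reduced_cycle_def)
  from rd have nj: "hd C \<noteq> arc_inv (last C)" by (simp add: reduced_iff)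
  have ne: "C \<noteq> []" using c by (simp add: is_cycle_def)
  have cc: "is_cycle Adj (C @ C)" using cycle_pw_iff[of 2 Adj C] c by (simp add: pw_2)
  have e: "even (length (C @ C))" by simp
  have ne2: "C @ C \<noteq> []" using ne by simp
  have at: "is_alt_cycle Adj (tilde_seq (C @ C))" using G1[OF sym cc e] by auto
  have "prime_alt_cycle Adj (tilde_seq (C @ C))"
  proof (rule prime_alt_intro[OF at])
    fix B :: "'a arc list" and r :: nat assume eB: "even (length B)" and r: "2 \<le> r"
    show "tilde_seq (C @ C) \<noteq> pw r B"
    proof
      assume "tilde_seq (C @ C) = pw r B"
      then have CC: "C @ C = pw r (tilde_seq B)" using tilde_pw[OF eB] by (metis tilde_tilde)
      let ?D = "tilde_seq B"
      let ?k = "length C"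
      obtain d where d: "length ?D = 2 * d" using eB by (auto elim: evenE)
      have "2 * ?k = r * (2 * d)" using CC d by (metis len_pw length_append mult_2)
      then have kd: "?k = r * d" by simp
      have r3: "r \<ge> 3"
      proof (rule ccontr)
        assume "\<not> r \<ge> 3"
        then have "r = 2" using r by simp
        then show False using kd o by simp
      qed
      have d0: "d > 0" using kd ne by (cases d) auto
      have lt: "2 * d < ?k"
      proof -
        have "3 * d \<le> r * d" using r3 by simp
        then show ?thesis using kd d0 by linarith
      qed
      have "rotate (length ?D) (C @ C) = C @ C" using CC rotate_pw by metis
      then have "rotate (length ?D) C @ rotate (length ?D) C = C @ C" by (simp add: rotate_double)
      then have "rotate (length ?D) C = C" by simp
      then have "length ?D mod ?k = 0" by (rule rot_fix[OF np])
      then show False using lt d0 d by simp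
    qed
  qed
  moreover have "reduced_alt_cycle Adj (tilde_seq (C @ C))"
  proof -
    have "hd (C @ C) \<noteq> arc_inv (last (C @ C))" using nj ne by simp
    then show ?thesis unfolding reduced_alt_cycle_def using at nb2 altbt_tilde tail_tilde[OF ne2 e] by blast
  qed
  ultimately show ?thesis by blast
qed

definition sw :: "bool \<Rightarrow> 'a arc list \<Rightarrow> 'a arc list" where
  "sw b X = (if b then tilde_seq X else bar_seq X)"

lemma len_sw[simp]: "length (sw b X) = length X" by (simp add: sw_def)

lemma rotate_sw: "even (length X) \<Longrightarrow> rotate n (sw b X) = sw (b = even n) (rotate n X)"
  by (cases b) (auto simp: sw_def tilde_rotate bar_rotate)

lemma sw_inj: "sw a X = sw a Y \<Longrightarrow> X = Y"
  by (cases a) (auto simp: sw_def dest: arg_cong[where f = tilde_seq] arg_cong[where f = bar_seq])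

lemma sw_pw: "even (length B) \<Longrightarrow> sw a (pw r B) = pw r (sw a B)"
  by (cases a) (auto simp: sw_def tilde_pw bar_pw)

lemma cross:
  assumes cx: "is_cycle Adj X" and cy: "is_cycle Adj Y" and l: "length X \<ge> 2"
    and eq: "tilde_seq X = bar_seq Y"
  shows "has_backtracking X \<and> has_backtracking Y"
proof -
  have lY: "length Y = length X" using eq by (metis len_tilde len_bar)
  have Yi: "\<And>i. i < length X \<Longrightarrow> Y ! i = arc_inv (X ! i)"
  proof -
    fix i assume i: "i < length X"
    have "tilde_seq X ! i = bar_seq Y ! i" using eq by simp
    then show "Y ! i = arc_inv (X ! i)" using i lY
      by (cases "even i") (auto simp: tilde_nth bar_nth inv_eq_iff)
  qed
  have hX: "termn (X ! 0) = orig (X ! 1)"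
    using cx l unfolding is_cycle_def by (metis One_nat_def Suc_1 Suc_le_lessD add_0)
  have hY: "termn (Y ! 0) = orig (Y ! 1)"
    using cy l lY unfolding is_cycle_def by (metis One_nat_def Suc_1 Suc_le_lessD add_0)
  have y0: "Y ! 0 = arc_inv (X ! 0)" and y1: "Y ! 1 = arc_inv (X ! 1)" using Yi[of 0] Yi[of 1] l by (auto simp del: length_greater_0_conv)
  have "orig (X ! 0) = termn (X ! 1)" using hY y0 y1 by simp
  then have x1: "X ! 1 = arc_inv (X ! 0)" using hX by (metis arc_split inv_pair)
  have "Y ! 1 = arc_inv (Y ! 0)" using y0 y1 x1 by simp
  moreover have "0 + 1 < length X" "0 + 1 < length Y" using l lY by auto
  ultimately show ?thesis using x1 unfolding has_backtracking_def by (metis One_nat_def add_0)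
qed

lemma match:
  assumes cx: "is_cycle Adj X" and cy: "is_cycle Adj Y" and nb: "\<not> has_backtracking X"
    and l: "length X \<ge> 2" and eq: "sw a X = sw b Y"
  shows "a = b \<and> X = Y"
proof (cases "a = b")
  case True then show ?thesis using eq sw_inj by blast
next
  case False
  then have "tilde_seq X = bar_seq Y \<or> bar_seq X = tilde_seq Y"
    using eq by (cases a; cases b) (auto simp: sw_def)
  moreover have lY: "length Y \<ge> 2" using eq l by (metis len_sw)
  ultimately have "has_backtracking X"
    using cross[OF cx cy l] cross[OF cy cx lY] by (metis)
  then show ?thesis using nb by simp
qed

lemma ec_match:
  assumes c1: "is_cycle Adj Z1" and nb: "\<not> has_backtracking Z1" and l: "length Z1 \<ge> 2"
    and c2: "is_cycle Adj Z2" and e2: "even (length Z2)"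
    and eq: "eq_class (sw a Z1) = eq_class (sw b Z2)"
  shows "\<exists>n. a = (b = even n) \<and> Z1 = rotate n Z2"
proof -
  from eq obtain n where "sw a Z1 = rotate n (sw b Z2)" by (auto simp: ec_eq_iff)
  then have "sw a Z1 = sw (b = even n) (rotate n Z2)" using rotate_sw[OF e2] by simp
  then have "a = (b = even n) \<and> Z1 = rotate n Z2"
    using match[OF c1 cycle_rotate[OF c2] nb l] by blast
  then show ?thesis by blast
qed



definition repE :: "'a arc set \<Rightarrow> 'a arc list set \<Rightarrow> 'a arc list" where
  "repE Adj c = (SOME C. c = eq_class C \<and> prime_cycle Adj C \<and> reduced_cycle Adj C \<and> even (length C))"
definition repO :: "'a arc set \<Rightarrow> 'a arc list set \<Rightarrow> 'a arc list" where
  "repO Adj c = (SOME C. c = eq_class C \<and> prime_cycle Adj C \<and> reduced_cycle Adj C \<and> odd (length C))"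

lemma repE: "c \<in> P_even Adj \<Longrightarrow> c = eq_class (repE Adj c) \<and> prime_cycle Adj (repE Adj c) \<and>
   reduced_cycle Adj (repE Adj c) \<and> even (length (repE Adj c))"
  unfolding repE_def P_even_def by (rule someI_ex) blast

lemma repO: "c \<in> P_odd Adj \<Longrightarrow> c = eq_class (repO Adj c) \<and> prime_cycle Adj (repO Adj c) \<and>
   reduced_cycle Adj (repO Adj c) \<and> odd (length (repO Adj c))"
  unfolding repO_def P_odd_def by (rule someI_ex) blast

lemma classE:
  assumes e: "even (length R)" and C: "C = rotate n R"
  shows "{eq_class (tilde_seq C), eq_class (bar_seq C)} = {eq_class (tilde_seq R), eq_class (bar_seq R)}"
proof (cases "even n")
  case True
  then have "tilde_seq C = rotate n (tilde_seq R)" "bar_seq C = rotate n (bar_seq R)"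
    using tilde_rotate[OF e, of n] bar_rotate[OF e, of n] C by auto
  then show ?thesis by (simp add: ec_rotate)
next
  case False
  then have "bar_seq C = rotate n (tilde_seq R)" "tilde_seq C = rotate n (bar_seq R)"
    using tilde_rotate[OF e, of n] bar_rotate[OF e, of n] C by auto
  then show ?thesis by (auto simp: ec_rotate)
qed

lemma classO:
  assumes o: "odd (length R)" and C: "C = rotate n R"
  shows "eq_class (tilde_seq (C @ C)) = eq_class (tilde_seq (R @ R))"
proof -
  have CC: "C @ C = rotate n (R @ R)" using C by (simp add: rotate_double)
  have e: "even (length (R @ R))" by simp
  show ?thesis
  proof (cases "even n")
    case True
    then have "tilde_seq (C @ C) = rotate n (tilde_seq (R @ R))" using tilde_rotate[OF e, of n] CC by auto
    then show ?thesis by (simp add: ec_rotate)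
  next
    case False
    then have 1: "tilde_seq (C @ C) = rotate n (bar_seq (R @ R))" using bar_rotate[OF e, of n] CC by auto
    have "rotate (length R) (R @ R) = R @ R" using rotate_pw[of R 2] by (simp add: pw_2)
    then have "bar_seq (R @ R) = rotate (length R) (tilde_seq (R @ R))"
      using tilde_rotate[OF e, of "length R"] o by simp
    then show ?thesis using 1 by (simp add: ec_rotate)
  qed
qed



lemma goodE: "c \<in> P_even Adj \<Longrightarrow> is_cycle Adj (repE Adj c) \<and> \<not> has_backtracking (repE Adj c) \<and>
   length (repE Adj c) \<ge> 2 \<and> even (length (repE Adj c)) \<and> noPow (repE Adj c)"
proof -
  assume c: "c \<in> P_even Adj"
  let ?R = "repE Adj c"
  from repE[OF c] have p: "prime_cycle Adj ?R" and r: "reduced_cycle Adj ?R" and e: "even (length ?R)" by auto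
  have "?R \<noteq> []" using r by (simp add: reduced_iff is_cycle_def)
  then have l0: "length ?R > 0" by simp
  have "length ?R \<noteq> 1" using e by auto
  then have "length ?R \<ge> 2" using l0 by linarith
  then show ?thesis using p r e by (simp add: reduced_iff prime_cycle_iff)
qed

lemma goodO: "c \<in> P_odd Adj \<Longrightarrow> is_cycle Adj (repO Adj c @ repO Adj c) \<and>
   \<not> has_backtracking (repO Adj c @ repO Adj c) \<and>
   length (repO Adj c @ repO Adj c) \<ge> 2 \<and> even (length (repO Adj c @ repO Adj c))"
proof -
  assume c: "c \<in> P_odd Adj"
  let ?R = "repO Adj c"
  from repO[OF c] have p: "prime_cycle Adj ?R" and r: "reduced_cycle Adj ?R" by auto
  have cy: "is_cycle Adj ?R" using p by (simp add: prime_cycle_def)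
  have "?R \<noteq> []" using cy by (simp add: is_cycle_def)
  then have "length (?R @ ?R) \<ge> 2" by (cases ?R) auto
  moreover have "is_cycle Adj (?R @ ?R)" using cycle_pw_iff[of 2 Adj ?R] cy by (simp add: pw_2)
  ultimately show ?thesis using r by (simp add: reduced_cycle_def)
qed

theorem proposition1:
  fixes V :: "'a set" and Adj :: "'a arc set"
  assumes G: "finite_connected_graph V Adj"
  shows
    "(\<forall>C. prime_cycle Adj C \<and> reduced_cycle Adj C \<and> even (length C) \<longrightarrow>
        prime_alt_cycle Adj (tilde_even C) \<and> reduced_alt_cycle Adj (tilde_even C) \<and>
        length (tilde_even C) = length C \<and>
        prime_alt_cycle Adj (bar_even C) \<and> reduced_alt_cycle Adj (bar_even C) \<and>
        length (bar_even C) = length C)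
   \<and> (\<forall>C. prime_cycle Adj C \<and> reduced_cycle Adj C \<and> odd (length C) \<longrightarrow>
        prime_alt_cycle Adj (tilde_odd C) \<and> reduced_alt_cycle Adj (tilde_odd C) \<and>
        length (tilde_odd C) = 2 * length C)
   \<and> (\<exists>f. bij_betw f (Inl ` (P_even Adj \<times> {1::nat, 2}) \<union> Inr ` P_odd Adj) (P_alt Adj) \<and>
        (\<forall>c\<in>P_even Adj. \<forall>C\<in>c.
           {f (Inl (c, 1)), f (Inl (c, 2))} = {eq_class (tilde_even C), eq_class (bar_even C)}) \<and>
        (\<forall>c\<in>P_odd Adj. \<forall>C\<in>c. f (Inr c) = eq_class (tilde_odd C)))"
proof -
  have sym: "sym Adj" using G by (simp add: finite_connected_graph_def)
  have P1: "\<forall>C. prime_cycle Adj C \<and> reduced_cycle Adj C \<and> even (length C) \<longrightarrow>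
        prime_alt_cycle Adj (tilde_even C) \<and> reduced_alt_cycle Adj (tilde_even C) \<and>
        length (tilde_even C) = length C \<and>
        prime_alt_cycle Adj (bar_even C) \<and> reduced_alt_cycle Adj (bar_even C) \<and>
        length (bar_even C) = length C"
    using part1[OF sym] by (simp add: tilde_even_def bar_even_def)
  have P2: "\<forall>C. prime_cycle Adj C \<and> reduced_cycle Adj C \<and> odd (length C) \<longrightarrow>
        prime_alt_cycle Adj (tilde_odd C) \<and> reduced_alt_cycle Adj (tilde_odd C) \<and>
        length (tilde_odd C) = 2 * length C"
    using part2[OF sym] by (simp add: tilde_odd_def)
  define f where "f = (\<lambda>x. case x of Inl (c, i) \<Rightarrow> eq_class (sw (i = (1::nat)) (repE Adj c))
                                 | Inr c \<Rightarrow> eq_class (sw True (repO Adj c @ repO Adj c)))"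
  have f1: "\<And>c. f (Inl (c, 1)) = eq_class (tilde_seq (repE Adj c))" by (simp add: f_def sw_def)
  have f2: "\<And>c. f (Inl (c, 2)) = eq_class (bar_seq (repE Adj c))" by (simp add: f_def sw_def)
  have fO: "\<And>c. f (Inr c) = eq_class (tilde_seq (repO Adj c @ repO Adj c))" by (simp add: f_def sw_def)
  let ?A = "Inl ` (P_even Adj \<times> {1::nat, 2}) \<union> Inr ` P_odd Adj"
  have PE: "\<forall>c\<in>P_even Adj. \<forall>C\<in>c.
           {f (Inl (c, 1)), f (Inl (c, 2))} = {eq_class (tilde_even C), eq_class (bar_even C)}"
  proof (intro ballI)
    fix c C assume c: "c \<in> P_even Adj" and C: "C \<in> c"
    from repE[OF c] have cr: "c = eq_class (repE Adj c)" and e: "even (length (repE Adj c))" by auto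
    from C cr obtain n where "C = rotate n (repE Adj c)" by (auto simp: eq_class_def)
    then show "{f (Inl (c, 1)), f (Inl (c, 2))} = {eq_class (tilde_even C), eq_class (bar_even C)}"
      using classE[OF e] f1 f2 by (simp add: tilde_even_def bar_even_def)
  qed
  have PO: "\<forall>c\<in>P_odd Adj. \<forall>C\<in>c. f (Inr c) = eq_class (tilde_odd C)"
  proof (intro ballI)
    fix c C assume c: "c \<in> P_odd Adj" and C: "C \<in> c"
    from repO[OF c] have cr: "c = eq_class (repO Adj c)" and o: "odd (length (repO Adj c))" by auto
    from C cr obtain n where "C = rotate n (repO Adj c)" by (auto simp: eq_class_def)
    then show "f (Inr c) = eq_class (tilde_odd C)"
      using classO[OF o] fO by (simp add: tilde_odd_def)
  qed
  have img1: "f ` ?A \<subseteq> P_alt Adj"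
  proof
    fix w assume "w \<in> f ` ?A"
    then obtain x where x: "x \<in> ?A" and w: "w = f x" by blast
    from x show "w \<in> P_alt Adj"
    proof
      assume "x \<in> Inl ` (P_even Adj \<times> {1::nat, 2})"
      then obtain c i where c: "c \<in> P_even Adj" and i: "i = 1 \<or> i = 2" and xi: "x = Inl (c, i)" by auto
      from repE[OF c] have "prime_alt_cycle Adj (tilde_seq (repE Adj c)) \<and> reduced_alt_cycle Adj (tilde_seq (repE Adj c)) \<and>
         prime_alt_cycle Adj (bar_seq (repE Adj c)) \<and> reduced_alt_cycle Adj (bar_seq (repE Adj c))"
        using part1[OF sym] by blast
      then show ?thesis using i w xi f1 f2 unfolding P_alt_def by auto
    next
      assume "x \<in> Inr ` P_odd Adj"
      then obtain c where c: "c \<in> P_odd Adj" and xi: "x = Inr c" by auto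
      from repO[OF c] have "prime_alt_cycle Adj (tilde_seq (repO Adj c @ repO Adj c)) \<and>
          reduced_alt_cycle Adj (tilde_seq (repO Adj c @ repO Adj c))"
        using part2[OF sym] by blast
      then show ?thesis using w xi fO unfolding P_alt_def by auto
    qed
  qed
  have img2: "P_alt Adj \<subseteq> f ` ?A"
  proof
    fix w assume "w \<in> P_alt Adj"
    then obtain W where w: "w = eq_class W" and pW: "prime_alt_cycle Adj W" and rW: "reduced_alt_cycle Adj W"
      unfolding P_alt_def by blast
    have aW: "is_alt_cycle Adj W" using pW by (simp add: prime_alt_cycle_def)
    then have eW: "even (length W)" by (simp add: is_alt_cycle_def)
    from G1'[OF sym aW] obtain C a where cC: "is_cycle Adj C" and lC: "length C = length W"
      and WC: "W = sw a C" unfolding sw_def by metis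
    have eC: "even (length C)" using eW lC by simp
    have neC: "C \<noteq> []" using cC by (simp add: is_cycle_def)
    have nbC: "\<not> has_backtracking C" using rW WC altbt_tilde altbt_bar
      unfolding reduced_alt_cycle_def sw_def by (cases a) auto
    have njC: "hd C \<noteq> arc_inv (last C)" using rW WC tail_tilde[OF neC eC] tail_bar[OF neC eC]
      unfolding reduced_alt_cycle_def sw_def by (cases a) auto
    have rC: "reduced_cycle Adj C" using cC nbC njC by (simp add: reduced_iff)
    from root[OF neC] obtain R r where r1: "r \<ge> 1" and CR: "C = pw r R" and npR: "noPow R" by blast
    have cR: "is_cycle Adj R" using cC CR cycle_pw_iff[OF r1] by metis
    show "w \<in> f ` ?A"
    proof (cases "r = 1")
      case True
      then have "C = R" using CR by simp
      then have pC: "prime_cycle Adj C" using cR npR by (simp add: prime_cycle_iff)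
      then have cE: "eq_class C \<in> P_even Adj" using rC eC unfolding P_even_def by blast
      have "{f (Inl (eq_class C, 1)), f (Inl (eq_class C, 2))} = {eq_class (tilde_seq C), eq_class (bar_seq C)}"
        using PE cE ec_self[of C] by (simp add: tilde_even_def bar_even_def)
      moreover have "w \<in> {eq_class (tilde_seq C), eq_class (bar_seq C)}" using w WC by (cases a) (auto simp: sw_def)
      ultimately have "w = f (Inl (eq_class C, 1)) \<or> w = f (Inl (eq_class C, 2))" by auto
      moreover have "Inl (eq_class C, 1) \<in> ?A" "Inl (eq_class C, 2) \<in> ?A" using cE by auto
      ultimately show ?thesis by blast
    next
      case False
      then have r2: "r \<ge> 2" using r1 by simp
      show ?thesis
      proof (cases "even (length R)")
        case True
        then have "W = pw r (sw a R)" using WC CR sw_pw by simp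
        moreover have "even (length (sw a R))" using True by simp
        ultimately show ?thesis using prime_alt_dest[OF sym pW _ r2] by blast
      next
        case oR: False
        have "even (r * length R)" using eC CR by (simp add: len_pw)
        then have "even r" using oR by simp
        then obtain s where s: "r = 2 * s" by (auto elim: evenE)
        have CRR: "C = pw s (R @ R)" using CR s pw_mult[of s 2 R] by (simp add: pw_2 mult.commute)
        have s1: "s = 1"
        proof (rule ccontr)
          assume "s \<noteq> 1"
          then have s2: "s \<ge> 2" using s r2 by simp
          have "W = pw s (sw a (R @ R))" using WC CRR sw_pw[of "R @ R"] by simp
          moreover have "even (length (sw a (R @ R)))" by simp
          ultimately show False using prime_alt_dest[OF sym pW _ s2] by blast
        qed
        then have CRR': "C = R @ R" using CRR by simp
        have nbRR: "\<not> has_backtracking (R @ R)" using rC CRR' by (simp add: reduced_cycle_def)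
        have neR: "R \<noteq> []" using noPow_ne[OF npR] .
        have rR: "reduced_cycle Adj R" using nbRR cR bt_append[of R R] bt_double[OF neR]
          by (simp add: reduced_iff)
        have pR: "prime_cycle Adj R" using cR npR by (simp add: prime_cycle_iff)
        have cO: "eq_class R \<in> P_odd Adj" using pR rR oR unfolding P_odd_def by blast
        have fR: "f (Inr (eq_class R)) = eq_class (tilde_seq (R @ R))"
          using PO cO ec_self[of R] by (simp add: tilde_odd_def)
        have "w = eq_class (tilde_seq (R @ R))"
        proof (cases a)
          case True then show ?thesis using w WC CRR' by (simp add: sw_def)
        next
          case False
          have e2: "even (length (R @ R))" by simp
          have "rotate (length R) (R @ R) = R @ R" using rotate_pw[of R 2] by (simp add: pw_2)
          then have "bar_seq (R @ R) = rotate (length R) (tilde_seq (R @ R))"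
            using tilde_rotate[OF e2, of "length R"] oR by simp
          then show ?thesis using w WC CRR' False by (simp add: sw_def ec_rotate)
        qed
        then show ?thesis using fR cO by blast
      qed
    qed
  qed
  have inj: "inj_on f ?A"
  proof (rule inj_onI)
    fix x y assume x: "x \<in> ?A" and y: "y \<in> ?A" and fxy: "f x = f y"
    show "x = y"
    proof (cases x)
      case (Inl xc)
      then obtain c i where c: "c \<in> P_even Adj" and i: "i = 1 \<or> i = 2" and xi: "x = Inl (c, i)" using x by auto
      obtain gc: "is_cycle Adj (repE Adj c)" "\<not> has_backtracking (repE Adj c)"
        "length (repE Adj c) \<ge> 2" "even (length (repE Adj c))" "noPow (repE Adj c)" using goodE[OF c] by blast
      have fx: "f x = eq_class (sw (i = 1) (repE Adj c))" using xi by (simp add: f_def)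
      show ?thesis
      proof (cases y)
        case (Inl yc)
        then obtain c' j where c': "c' \<in> P_even Adj" and j: "j = 1 \<or> j = 2" and yj: "y = Inl (c', j)" using y by auto
        have fy: "f y = eq_class (sw (j = 1) (repE Adj c'))" using yj by (simp add: f_def)
        obtain gc': "is_cycle Adj (repE Adj c')" "even (length (repE Adj c'))" using goodE[OF c'] by blast
        from ec_match[OF gc(1,2,3) gc'(1,2)] fx fy fxy obtain n where
          n: "(i = 1) = ((j = 1) = even n)" and Rn: "repE Adj c = rotate n (repE Adj c')" by metis
        have cc: "c = c'" using repE[OF c] repE[OF c'] Rn ec_rotate by metis
        then have "rotate n (repE Adj c) = repE Adj c" using Rn by simp
        then have "n mod length (repE Adj c) = 0" by (rule rot_fix[OF gc(5)])
        then have "even n" using gc(4) by (metis dvd_trans mod_0_imp_dvd)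
        then have "i = j" using n i j by auto
        then show ?thesis using xi yj cc by simp
      next
        case (Inr c')
        then have c': "c' \<in> P_odd Adj" using y by auto
        have fy: "f y = eq_class (sw True (repO Adj c' @ repO Adj c'))" using Inr by (simp add: f_def)
        obtain gc': "is_cycle Adj (repO Adj c' @ repO Adj c')" "even (length (repO Adj c' @ repO Adj c'))"
          using goodO[OF c'] by blast
        from ec_match[OF gc(1,2,3) gc'(1,2)] fx fy fxy obtain n where
          Rn: "repE Adj c = rotate n (repO Adj c' @ repO Adj c')" by metis
        then have "repE Adj c = pw 2 (rotate n (repO Adj c'))" by (simp add: rotate_double pw_2)
        then show ?thesis using gc(5) unfolding noPow_def by blast
      qed
    next
      case (Inr c)
      then have c: "c \<in> P_odd Adj" using x by auto
      have fx: "f x = eq_class (sw True (repO Adj c @ repO Adj c))" using Inr by (simp add: f_def)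
      obtain gc: "is_cycle Adj (repO Adj c @ repO Adj c)" "\<not> has_backtracking (repO Adj c @ repO Adj c)"
        "length (repO Adj c @ repO Adj c) \<ge> 2" "even (length (repO Adj c @ repO Adj c))"
        using goodO[OF c] by blast
      show ?thesis
      proof (cases y)
        case (Inl yc)
        then obtain c' j where c': "c' \<in> P_even Adj" and yj: "y = Inl (c', j)" using y by auto
        have fy: "f y = eq_class (sw (j = 1) (repE Adj c'))" using yj by (simp add: f_def)
        obtain gc': "is_cycle Adj (repE Adj c')" "\<not> has_backtracking (repE Adj c')"
          "length (repE Adj c') \<ge> 2" "even (length (repE Adj c'))" "noPow (repE Adj c')" using goodE[OF c'] by blast
        from ec_match[OF gc'(1,2,3) gc(1,4)] fx fy fxy obtain n where
          Rn: "repE Adj c' = rotate n (repO Adj c @ repO Adj c)" by metis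
        then have "repE Adj c' = pw 2 (rotate n (repO Adj c))" by (simp add: rotate_double pw_2)
        then show ?thesis using gc'(5) unfolding noPow_def by blast
      next
        case (Inr c')
        then have c': "c' \<in> P_odd Adj" using y by auto
        have fy: "f y = eq_class (sw True (repO Adj c' @ repO Adj c'))" using Inr by (simp add: f_def)
        obtain gc': "is_cycle Adj (repO Adj c' @ repO Adj c')" "even (length (repO Adj c' @ repO Adj c'))"
          using goodO[OF c'] by blast
        from ec_match[OF gc(1,2,3) gc'(1,2)] fx fy fxy obtain n where
          Rn: "repO Adj c @ repO Adj c = rotate n (repO Adj c' @ repO Adj c')" by metis
        then have "repO Adj c @ repO Adj c = rotate n (repO Adj c') @ rotate n (repO Adj c')"
          by (simp add: rotate_double)
        moreover have "length (repO Adj c) = length (rotate n (repO Adj c'))"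
        proof -
          have "length (repO Adj c @ repO Adj c) = length (rotate n (repO Adj c') @ rotate n (repO Adj c'))"
            using calculation by simp
          then show ?thesis by simp
        qed
        ultimately have "repO Adj c = rotate n (repO Adj c')" by simp
        then have "c = c'" using repO[OF c] repO[OF c'] ec_rotate by metis
        then show ?thesis using \<open>x = Inr c\<close> Inr by simp
      qed
    qed
  qed
  have "bij_betw f ?A (P_alt Adj)" unfolding bij_betw_def using inj img1 img2 by blast
  then show ?thesis using P1 P2 PE PO by blast
qed

end
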